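(* Let $(X_i)_{i=1}^n$ be a martingale difference sequence adapted to a filtration $(\mathcal F_i)_{i=0}^n$, $S_t=\sum_{i=1}^tX_i$, and suppose that for each $i$ there is a constant $m_i>0$ with $\mathbb E\big[\exp\big((|X_i|/m_i)^{1/\theta}\big)\mid\mathcal F_{i-1}\big]\le2$; let $m_*=\max_im_i$. Then for any $\delta\in(0,1)$: (i) if $\theta=1/2$, $$P\Big(\bigcup_{t=1}^n\Big\{S_t\ge4\sqrt{e\sum_{i=1}^nm_i^2\log(1/\delta)}\Big\}\Big)\le\delta;$$ (ii) if $\theta\ge1$, then for any $s\ge0$, $$P\Big(\bigcup_{t=1}^n\Big\{S_t\ge\sqrt{C_1\sum_{i=1}^nm_i^2\log(2/\delta)}+4m_*\max\Big\{\log^{\theta-1}\Big(\frac{2e\sum_{j=1}^nm_j^s}{m_*^s\delta}\Big),(s\theta-s)^{\theta-1}\Big\}\log(2/\delta)\Big\}\Big)\le\delta,$$ where $C_1=2^{3\theta+1}\Gamma(3\theta+1)$ and $0^0=1$. *)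

theory Defs
  imports "HOL-Probability.Probability"
begin

definition filtration_upto :: "'a measure \<Rightarrow> nat \<Rightarrow> (nat \<Rightarrow> 'a measure) \<Rightarrow> bool" where
  "filtration_upto M n F \<longleftrightarrow>
     (\<forall>i\<le>n. subalgebra M (F i)) \<and>
     (\<forall>i j. i \<le> j \<and> j \<le> n \<longrightarrow> sets (F i) \<subseteq> sets (F j))"

definition mds_upto :: "'a measure \<Rightarrow> nat \<Rightarrow> (nat \<Rightarrow> 'a measure) \<Rightarrow> (nat \<Rightarrow> 'a \<Rightarrow> real) \<Rightarrow> bool" where
  "mds_upto M n F X \<longleftrightarrow>
     filtration_upto M n F \<and>
     (\<forall>i\<in>{1..n}. X i \<in> borel_measurable (F i) \<and> integrable M (X i) \<and>
        (AE x in M. real_cond_exp M (F (i - 1)) (X i) x = 0))"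

text \<open>Real power with the convention 0^0 = 1 (powr has 0 powr 0 = 0).\<close>
definition zpow :: "real \<Rightarrow> real \<Rightarrow> real" where
  "zpow x a = (if x = 0 \<and> a = 0 then 1 else x powr a)"

end

theory Submission
  imports Defs
begin


lemma gamma_lower:
  fixes p y :: real assumes p: "p > 0" and y: "y \<ge> 0"
  shows "y powr p * exp (-y) \<le> Gamma (p+1)"
proof -
  have e: "(\<integral>\<^sup>+t. ennreal (exp (-t)) * indicator {y ..} t \<partial>lborel) = ennreal (0 - (- exp (-y)))"
    by (rule nn_integral_FTC_atLeast[where F="\<lambda>t. - exp (-t)"])
       (auto intro!: derivative_eq_intros tendsto_minus_cancel_left[THEN iffD1]
             filterlim_compose[OF exp_at_bot filterlim_uminus_at_bot_at_top])
  have "ennreal (y powr p * exp (-y)) = ennreal (y powr p) * (\<integral>\<^sup>+t. ennreal (exp (-t)) * indicator {y ..} t \<partial>lborel)"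
    using e y by (simp add: ennreal_mult)
  also have "\<dots> = (\<integral>\<^sup>+t. ennreal (y powr p) * (ennreal (exp (-t)) * indicator {y ..} t) \<partial>lborel)"
    by (rule nn_integral_cmult[symmetric]) auto
  also have "\<dots> \<le> (\<integral>\<^sup>+t. ennreal (indicator {0..} t * t powr (p + 1 - 1) / exp t) \<partial>lborel)"
  proof (rule nn_integral_mono)
    fix t
    show "ennreal (y powr p) * (ennreal (exp (-t)) * indicator {y ..} t) \<le> ennreal (indicator {0..} t * t powr (p + 1 - 1) / exp t)"
    proof (cases "y \<le> t")
      case True
      have "y powr p \<le> t powr p" using True y p by (intro powr_mono2) auto
      hence "y powr p * exp (-t) \<le> t powr p / exp t" by (simp add: exp_minus divide_inverse mult_right_mono)
      then show ?thesis using True y by (simp add: ennreal_mult[symmetric])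
    qed auto
  qed
  also have "\<dots> = Gamma (p+1)" using p by (subst Gamma_conv_nn_integral_real) auto
  finally show ?thesis using Gamma_real_pos[of "p+1"] p by (simp add: ennreal_le_iff)
qed




lemma exp_taylor2_neg:
  fixes w :: real assumes "w \<le> 0" shows "exp w \<le> 1 + w + w^2/2"
proof -
  define g where "g = (\<lambda>w::real. 1 + w + w^2/2 - exp w)"
  have "g 0 \<le> g w"
  proof (rule DERIV_nonpos_imp_nonincreasing[of w 0 g])
    show "w \<le> 0" by fact
    fix x assume "w \<le> x" "x \<le> 0"
    show "\<exists>y. DERIV g x :> y \<and> y \<le> 0"
      by (rule exI[of _ "1 + x - exp x"]) (auto simp: g_def intro!: derivative_eq_intros exp_ge_add_one_self)
  qed
  then show ?thesis by (simp add: g_def)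
qed

lemma exp_taylor2_pos:
  fixes w :: real assumes "w \<ge> 0" shows "exp w \<le> 1 + w + w^2/2 * exp w"
proof -
  define g where "g = (\<lambda>w::real. 1 + w + w^2/2 * exp w - exp w)"
  have "g 0 \<le> g w"
  proof (rule DERIV_nonneg_imp_nondecreasing[of 0 w g])
    show "0 \<le> w" by fact
    fix x :: real assume x: "0 \<le> x" "x \<le> w"
    have "exp (-x) \<ge> 1 - x" using exp_ge_add_one_self[of "-x"] by simp
    hence "exp x * (1 - x) \<le> 1" by (simp add: exp_minus field_simps)
    hence a: "exp x - x * exp x \<le> 1" by (simp add: algebra_simps)
    have b: "x^2/2 * exp x \<ge> 0" by simp
    have "0 \<le> 1 + x * exp x + x^2/2 * exp x - exp x" using a b by linarith
    then show "\<exists>y. DERIV g x :> y \<and> 0 \<le> y"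
      apply (intro exI[of _ "1 + x * exp x + x^2/2 * exp x - exp x"] conjI)
      apply (auto simp: g_def intro!: derivative_eq_intros simp: power2_eq_square algebra_simps)
      done
  qed
  then show ?thesis by (simp add: g_def)
qed

lemma exp_taylor2:
  fixes w :: real shows "exp w \<le> 1 + w + w^2/2 * exp (max w 0)"
proof (cases "w \<ge> 0")
  case True then show ?thesis using exp_taylor2_pos[of w] by (simp add: max_def)
next
  case False then show ?thesis using exp_taylor2_neg[of w] by (simp add: max_def)
qed




lemma maxdiff: "lam * max x 0 - lam * max (-x) 0 = lam * (x::real)"
  by (simp add: max_def algebra_simps)

lemma z_exp_half: fixes z :: real shows "z * exp (z/2) \<le> 2 / exp 1 * exp z"
proof -
  have "z/2 \<le> exp (z/2 - 1)" using exp_ge_add_one_self[of "z/2-1"] by simp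
  also have "exp (z/2 - 1) = exp (z/2) / exp 1" by (simp add: exp_diff)
  finally have "z \<le> 2 * (exp (z/2) / exp 1)" by linarith
  then have "z \<le> 2 * exp (z/2) / exp 1" by simp
  then have "z * exp (z/2) \<le> 2 * exp (z/2) / exp 1 * exp (z/2)" by (rule mult_right_mono) simp
  also have "\<dots> = 2 / exp 1 * exp z" by (simp add: mult_exp_exp)
  finally show ?thesis .
qed

lemma subg_pw:
  fixes lam m x :: real assumes lam: "lam \<ge> 0" and m: "m > 0"
  shows "exp (lam*x) + lam * max (-x) 0 \<le> 1 + lam * max x 0
           + (lam^2*m^2 * exp (lam^2*m^2/2) / exp 1) * exp ((\<bar>x\<bar>/m) powr (1/(1/2)))"
proof -
  define a where "a = lam^2*m^2"
  define z where "z = x^2/m^2"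
  have zeq: "(\<bar>x\<bar>/m) powr (1/(1/2)) = z" unfolding z_def using m
    by (simp add: powr_numeral power_divide)
  define w where "w = lam * x"
  have h1: "exp w \<le> 1 + w + w^2/2 * exp (max w 0)" by (rule exp_taylor2)
  have sq: "0 \<le> (lam*m - \<bar>x\<bar>/m)^2" by simp
  have "(lam*m - \<bar>x\<bar>/m)^2 = a - 2*lam*\<bar>x\<bar> + z" unfolding a_def z_def using m
    by (simp add: power2_eq_square field_simps)
  with sq have h2a: "lam*\<bar>x\<bar> \<le> (a + z)/2" by simp
  have h2b: "max w 0 \<le> lam * \<bar>x\<bar>" unfolding w_def using lam by (auto simp: max_def abs_if mult_left_mono)
  have h2: "max w 0 \<le> (a + z)/2" using h2b h2a by (rule order_trans)
  have h3: "w^2 = a * z" unfolding w_def a_def z_def using m by (simp add: power_mult_distrib)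
  have a0: "a \<ge> 0" "z \<ge> 0" unfolding a_def z_def by simp_all
  have "w^2/2 * exp (max w 0) \<le> a*z/2 * exp ((a+z)/2)"
    using h2 h3 a0 by (auto intro!: mult_left_mono)
  also have "\<dots> = a/2 * exp (a/2) * (z * exp (z/2))" by (simp add: add_divide_distrib exp_add)
  also have "\<dots> \<le> a/2 * exp (a/2) * (2 / exp 1 * exp z)"
    using a0 by (intro mult_left_mono z_exp_half) auto
  also have "\<dots> = (a * exp (a/2) / exp 1) * exp z" by simp
  finally have "exp w \<le> 1 + w + (a * exp (a/2) / exp 1) * exp z" using h1 by linarith
  then show ?thesis unfolding zeq using maxdiff[of lam x] unfolding w_def a_def by linarith
qed

lemma subg_final: fixes a :: real assumes "a \<ge> 0"
  shows "1 + 2 * (a * exp (a/2) / exp 1) \<le> exp (4*a)"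
proof -
  have "exp (a/2) / exp 1 \<le> exp (2*a)" using assms by (simp add: exp_diff[symmetric])
  then have "a * (exp (a/2) / exp 1) \<le> a * exp (2*a)" using assms by (rule mult_left_mono)
  then have "2*(a * exp (a/2) / exp 1) \<le> 2*a * exp (2*a)" by simp
  moreover have "1 \<le> exp (2*a)" using assms by simp
  moreover have "1 + 2*a \<le> exp (2*a)" using exp_ge_add_one_self[of "2*a"] by simp
  ultimately have "1 + 2 * (a * exp (a/2) / exp 1) \<le> exp (2*a) + 2*a*exp(2*a)" by linarith
  also have "\<dots> = (1 + 2*a) * exp (2*a)" by (simp add: algebra_simps)
  also have "\<dots> \<le> exp (2*a) * exp (2*a)" using \<open>1 + 2*a \<le> exp (2*a)\<close> by (intro mult_right_mono) auto
  also have "\<dots> = exp (4*a)" by (simp add: mult_exp_exp)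
  finally show ?thesis .
qed




lemma subw_K:
  fixes z th :: real assumes th: "th \<ge> 1" and z: "z \<ge> 0"
  shows "z powr (2*th) \<le> 2 powr (3*th - 1) * Gamma (3*th + 1) * exp (z/2)"
proof (cases "z powr th \<ge> 2")
  case True
  have g: "(z/2) powr (3*th) * exp (-(z/2)) \<le> Gamma (3*th + 1)"
    using th z by (intro gamma_lower) auto
  have "2 powr (3*th - 1) * (z/2) powr (3*th) = z powr (3*th) / 2"
    using z by (simp add: powr_divide powr_diff field_simps)
  also have "z powr (3*th) = z powr (2*th) * z powr th" by (simp add: powr_add[symmetric])
  finally have e1: "2 powr (3*th - 1) * (z/2) powr (3*th) = z powr (2*th) * z powr th / 2" .
  have "2 * z powr (2*th) \<le> z powr th * z powr (2*th)" using True by (intro mult_right_mono) auto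
  then have "z powr (2*th) \<le> z powr (2*th) * z powr th / 2" by (simp add: field_simps)
  also have "\<dots> = 2 powr (3*th - 1) * ((z/2) powr (3*th) * exp (-(z/2))) * exp (z/2)"
    by (simp add: e1[symmetric] exp_minus)
  also have "\<dots> \<le> 2 powr (3*th - 1) * Gamma (3*th + 1) * exp (z/2)"
    using g by (intro mult_right_mono mult_left_mono) auto
  finally show ?thesis .
next
  case False
  have "z powr (2*th) = (z powr th)^2" using z by (simp add: powr_powr[symmetric] powr_realpow[symmetric] mult.commute)
  also have "\<dots> \<le> 2^2" using False by (intro power_mono) auto
  also have "(2::real)^2 = 4" by simp
  finally have a: "z powr (2*th) \<le> 4" .
  have g: "2 powr (3*th) * exp (-2) \<le> Gamma (3*th + 1)"
    using th gamma_lower[of "3*th" 2] by auto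
  have e2: "exp (2::real) \<le> 8"
  proof -
    have "exp (2::real) = exp 1 * exp 1" by (simp add: mult_exp_exp)
    also have "\<dots> \<le> 2.72 * 2.72" using e_less_272 by (intro mult_mono) auto
    finally show ?thesis by simp
  qed
  have "2 powr (3*th - 1) * 2 powr (3*th) = 2 powr (6*th - 1)" by (simp add: powr_add[symmetric])
  moreover have "2 powr (6*th - 1) \<ge> 2 powr (5::real)" using th by (intro powr_mono) auto
  moreover have "2 powr (5::real) = 32" by simp
  ultimately have "2 powr (3*th - 1) * 2 powr (3*th) \<ge> 32" by simp
  then have "4 \<le> 2 powr (3*th - 1) * (2 powr (3*th) * exp (-2))"
    using e2 by (simp add: exp_minus field_simps)
  also have "\<dots> \<le> 2 powr (3*th - 1) * Gamma (3*th + 1)"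
    using g by (intro mult_left_mono) auto
  also have "\<dots> \<le> 2 powr (3*th - 1) * Gamma (3*th + 1) * exp (z/2)"
  proof -
    have "1 \<le> exp (z/2)" using z by simp
    moreover have "0 \<le> 2 powr (3*th - 1) * Gamma (3*th + 1)" using Gamma_real_pos[of "3*th+1"] th by simp
    ultimately show ?thesis using mult_left_mono[of 1 "exp (z/2)"] by fastforce
  qed
  finally show ?thesis using a by linarith
qed

lemma subw_pw:
  fixes th lam m x y :: real
  assumes th: "th \<ge> 1" and lam: "lam \<ge> 0" and m: "m > 0" and yx: "\<bar>y\<bar> \<le> \<bar>x\<bar>"
    and yz: "y > 0 \<Longrightarrow> lam * y \<le> ((\<bar>x\<bar>/m) powr (1/th)) / 2"
  shows "exp (lam*y) + lam * max (-y) 0 \<le> 1 + lam * max y 0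
     + (lam^2 * m^2 * (2 powr (3*th - 1) * Gamma (3*th + 1)) / 2) * exp ((\<bar>x\<bar>/m) powr (1/th))"
proof -
  define z where "z = (\<bar>x\<bar>/m) powr (1/th)"
  define K where "K = 2 powr (3*th - 1) * Gamma (3*th + 1)"
  define w where "w = lam * y"
  have z0: "z \<ge> 0" unfolding z_def by simp
  have h1: "exp w \<le> 1 + w + w^2/2 * exp (max w 0)" by (rule exp_taylor2)
  have h2: "max w 0 \<le> z/2" using yz z0 lam unfolding w_def z_def
    by (cases "y > 0") (auto simp: max_def mult_nonneg_nonpos)
  have zp: "z powr (2*th) = x^2/m^2"
  proof -
    have "(1/th)*(2*th) = 2" using th by simp
    then have "z powr (2*th) = (\<bar>x\<bar>/m) powr 2" unfolding z_def by (simp add: powr_powr)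
    also have "\<dots> = (\<bar>x\<bar>/m)^2" using m by (simp add: powr_numeral)
    also have "\<dots> = x^2/m^2" by (simp add: power_divide)
    finally show ?thesis .
  qed
  have h3: "w^2 \<le> lam^2 * x^2" unfolding w_def using yx
  proof -
    have "y^2 \<le> x^2" using yx by (simp add: abs_le_square_iff)
    then show "(lam*y)^2 \<le> lam^2 * x^2" by (simp add: power_mult_distrib mult_left_mono)
  qed
  have "w^2/2 * exp (max w 0) \<le> lam^2 * x^2 / 2 * exp (z/2)"
    using h2 h3 by (intro mult_mono divide_right_mono) auto
  also have "lam^2 * x^2 = lam^2 * m^2 * z powr (2*th)" using zp m by simp
  also have "lam^2 * m^2 * z powr (2*th) / 2 * exp (z/2) \<le> lam^2 * m^2 * (K * exp (z/2)) / 2 * exp (z/2)"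
    using subw_K[OF th z0] unfolding K_def by (intro mult_right_mono divide_right_mono mult_left_mono) auto
  also have "\<dots> = (lam^2 * m^2 * K / 2) * (exp (z/2) * exp (z/2))" by simp
  also have "exp (z/2) * exp (z/2) = exp z" by (simp add: mult_exp_exp)
  finally have "exp w \<le> 1 + w + (lam^2 * m^2 * K / 2) * exp z" using h1 by linarith
  then show ?thesis using maxdiff[of lam y] unfolding w_def z_def K_def by linarith
qed




lemma enn3: "a \<ge> 0 \<Longrightarrow> b \<ge> 0 \<Longrightarrow> c \<ge> 0 \<Longrightarrow> e \<ge> 0 \<Longrightarrow>
   ennreal a + ennreal b * ennreal c + ennreal e = ennreal (a + b * c + e)"
  by (simp add: ennreal_plus ennreal_mult)

lemma ennreal_max0: "ennreal y = ennreal (max y 0)"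
  by (simp add: max_def ennreal_neg)

context sigma_finite_subalgebra
begin

lemma nc_const: "AE x in M. nn_cond_exp M F (\<lambda>_. c) x = c"
  using nn_cond_exp_F_meas[of "\<lambda>_. c"] by auto

lemma nc_cmult:
  assumes [measurable]: "g \<in> borel_measurable M"
  shows "AE x in M. nn_cond_exp M F (\<lambda>x. c * g x) x = c * nn_cond_exp M F g x"
  using nn_cond_exp_prod[of "\<lambda>_. c" g] by auto

lemma nc_finite:
  assumes "integrable M f"
  shows "AE x in M. nn_cond_exp M F (\<lambda>x. ennreal (f x)) x \<noteq> \<infinity>"
proof (rule nn_integral_noteq_infinite)
  have [measurable]: "f \<in> borel_measurable M" using assms by auto
  have "(\<integral>\<^sup>+x. nn_cond_exp M F (\<lambda>x. ennreal (f x)) x \<partial>M) = (\<integral>\<^sup>+x. 1 * nn_cond_exp M F (\<lambda>x. ennreal (f x)) x \<partial>M)" by simp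
  also have "\<dots> = (\<integral>\<^sup>+x. 1 * ennreal (f x) \<partial>M)" by (rule nn_cond_exp_intg) auto
  also have "\<dots> \<noteq> \<infinity>" using assms by auto
  finally show "(\<integral>\<^sup>+x. nn_cond_exp M F (\<lambda>x. ennreal (f x)) x \<partial>M) \<noteq> \<infinity>" .
qed simp

lemma nc_pos_neg_eq:
  assumes "integrable M X" "AE x in M. real_cond_exp M F X x = 0"
  shows "AE x in M. nn_cond_exp M F (\<lambda>x. ennreal (X x)) x = nn_cond_exp M F (\<lambda>x. ennreal (- X x)) x"
proof -
  have i2: "integrable M (\<lambda>x. - X x)" using assms by auto
  show ?thesis using nc_finite[OF assms(1)] nc_finite[OF i2] assms(2)
  proof eventually_elim
    case (elim x)
    let ?a = "nn_cond_exp M F (\<lambda>x. ennreal (X x)) x" and ?b = "nn_cond_exp M F (\<lambda>x. ennreal (- X x)) x"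
    have "enn2real ?a = enn2real ?b" using elim(3) by (simp add: real_cond_exp_def)
    then have "ennreal (enn2real ?a) = ennreal (enn2real ?b)" by simp
    then show ?case using elim(1,2) by (simp add: ennreal_enn2real_if)
  qed
qed

lemma step:
  fixes X Y Z :: "'a \<Rightarrow> real" and lam mu c0 d kap :: real
  assumes X: "integrable M X" "AE x in M. real_cond_exp M F X x = 0"
    and [measurable]: "Y \<in> borel_measurable M" "Z \<in> borel_measurable M"
    and Zb: "AE x in M. nn_cond_exp M F (\<lambda>x. ennreal (exp (Z x))) x \<le> 2"
    and pos: "mu \<ge> 0" "c0 \<ge> 0" "d \<ge> 0" "kap \<ge> 0"
    and pw: "\<And>x. x \<in> space M \<Longrightarrow> exp (lam * Y x) + mu * max (- Y x) 0 + c0 \<le> kap + mu * max (Y x) 0 + d * exp (Z x)"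
    and YX: "\<And>x. x \<in> space M \<Longrightarrow> Y x \<le> X x" "\<And>x. x \<in> space M \<Longrightarrow> max (- Y x) 0 = max (- X x) 0"
  shows "AE x in M. nn_cond_exp M F (\<lambda>x. ennreal (exp (lam * Y x))) x + ennreal c0 \<le> ennreal (kap + 2 * d)"
proof -
  have [measurable]: "X \<in> borel_measurable M" using X by auto
  define E where "E = (\<lambda>x. ennreal (exp (lam * Y x)))"
  define Yp where "Yp = (\<lambda>x. ennreal (Y x))"
  define Ym where "Ym = (\<lambda>x. ennreal (- Y x))"
  define Xp where "Xp = (\<lambda>x. ennreal (X x))"
  define Xm where "Xm = (\<lambda>x. ennreal (- X x))"
  define Ez where "Ez = (\<lambda>x. ennreal (exp (Z x)))"
  have [measurable]: "E \<in> borel_measurable M" "Yp \<in> borel_measurable M" "Ym \<in> borel_measurable M"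
    "Xp \<in> borel_measurable M" "Xm \<in> borel_measurable M" "Ez \<in> borel_measurable M"
    unfolding E_def Yp_def Ym_def Xp_def Xm_def Ez_def by auto
  have pw': "E x + ennreal mu * Ym x + ennreal c0 \<le> ennreal kap + ennreal mu * Yp x + ennreal d * Ez x"
    if x: "x \<in> space M" for x
  proof -
    have "E x + ennreal mu * Ym x + ennreal c0 = ennreal (exp (lam * Y x) + mu * max (- Y x) 0 + c0)"
      unfolding E_def Ym_def using pos
      by (subst ennreal_max0[of "- Y x"], subst enn3) auto
    also have "\<dots> \<le> ennreal (kap + mu * max (Y x) 0 + d * exp (Z x))"
      using pw[OF x] by (rule ennreal_leI)
    also have "\<dots> = ennreal kap + ennreal mu * Yp x + ennreal d * Ez x"
      unfolding Yp_def Ez_def using pos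
      by (subst ennreal_max0[of "Y x"], subst enn3[symmetric]) (auto simp: ennreal_mult)
    finally show ?thesis .
  qed
  have A1: "AE x in M. nn_cond_exp M F (\<lambda>x. E x + ennreal mu * Ym x + ennreal c0) x
      \<le> nn_cond_exp M F (\<lambda>x. ennreal kap + ennreal mu * Yp x + ennreal d * Ez x) x"
    by (rule nn_cond_exp_mono) (auto intro!: AE_I2 pw')
  have s1: "AE x in M. nn_cond_exp M F (\<lambda>x. E x + ennreal mu * Ym x) x + nn_cond_exp M F (\<lambda>_. ennreal c0) x = nn_cond_exp M F (\<lambda>x. E x + ennreal mu * Ym x + ennreal c0) x"
    by (rule nn_cond_exp_sum) auto
  have s2: "AE x in M. nn_cond_exp M F E x + nn_cond_exp M F (\<lambda>x. ennreal mu * Ym x) x = nn_cond_exp M F (\<lambda>x. E x + ennreal mu * Ym x) x"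
    by (rule nn_cond_exp_sum) auto
  have s3: "AE x in M. nn_cond_exp M F (\<lambda>x. ennreal kap + ennreal mu * Yp x) x + nn_cond_exp M F (\<lambda>x. ennreal d * Ez x) x = nn_cond_exp M F (\<lambda>x. ennreal kap + ennreal mu * Yp x + ennreal d * Ez x) x"
    by (rule nn_cond_exp_sum) auto
  have s4: "AE x in M. nn_cond_exp M F (\<lambda>_. ennreal kap) x + nn_cond_exp M F (\<lambda>x. ennreal mu * Yp x) x = nn_cond_exp M F (\<lambda>x. ennreal kap + ennreal mu * Yp x) x"
    by (rule nn_cond_exp_sum) auto
  have A2: "AE x in M. nn_cond_exp M F (\<lambda>x. E x + ennreal mu * Ym x + ennreal c0) x
      = nn_cond_exp M F E x + ennreal mu * nn_cond_exp M F Ym x + ennreal c0"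
    using s1 s2 nc_const[of "ennreal c0"] nc_cmult[of Ym "ennreal mu", OF \<open>Ym \<in> borel_measurable M\<close>]
    by eventually_elim auto
  have A3: "AE x in M. nn_cond_exp M F (\<lambda>x. ennreal kap + ennreal mu * Yp x + ennreal d * Ez x) x
      = ennreal kap + ennreal mu * nn_cond_exp M F Yp x + ennreal d * nn_cond_exp M F Ez x"
    using s3 s4 nc_const[of "ennreal kap"]
      nc_cmult[of Yp "ennreal mu", OF \<open>Yp \<in> borel_measurable M\<close>] nc_cmult[of Ez "ennreal d", OF \<open>Ez \<in> borel_measurable M\<close>]
    by eventually_elim auto
  have A4: "AE x in M. nn_cond_exp M F Yp x \<le> nn_cond_exp M F Xp x"
    by (rule nn_cond_exp_mono) (auto intro!: AE_I2 simp: Yp_def Xp_def YX ennreal_leI)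
  have YmXm: "\<forall>x\<in>space M. Ym x = Xm x"
  proof
    fix x assume x: "x \<in> space M"
    have "ennreal (- Y x) = ennreal (max (- Y x) 0)" by (rule ennreal_max0)
    also have "\<dots> = ennreal (max (- X x) 0)" using YX(2)[OF x] by simp
    also have "\<dots> = ennreal (- X x)" by (rule ennreal_max0[symmetric])
    finally show "Ym x = Xm x" unfolding Ym_def Xm_def .
  qed
  have A5: "AE x in M. nn_cond_exp M F Ym x = nn_cond_exp M F Xm x"
    by (rule nn_cond_exp_cong) (use YmXm in \<open>auto intro!: AE_I2\<close>)
  have A6: "AE x in M. nn_cond_exp M F Xp x = nn_cond_exp M F Xm x"
    using nc_pos_neg_eq[OF X] unfolding Xp_def Xm_def .
  have A7: "AE x in M. nn_cond_exp M F Xm x \<noteq> \<infinity>"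
    using nc_finite[of "\<lambda>x. - X x"] X unfolding Xm_def by auto
  show ?thesis
    using A1 A2 A3 A4 A5 A6 A7 Zb
  proof eventually_elim
    case (elim x)
    let ?a = "nn_cond_exp M F Xm x"
    have "nn_cond_exp M F E x + ennreal mu * ?a + ennreal c0
        = nn_cond_exp M F (\<lambda>x. E x + ennreal mu * Ym x + ennreal c0) x"
      using elim(2,5) by simp
    also have "\<dots> \<le> nn_cond_exp M F (\<lambda>x. ennreal kap + ennreal mu * Yp x + ennreal d * Ez x) x"
      by (rule elim(1))
    also have "\<dots> = ennreal kap + ennreal mu * nn_cond_exp M F Yp x + ennreal d * nn_cond_exp M F Ez x"
      by (rule elim(3))
    also have "\<dots> \<le> ennreal kap + ennreal mu * nn_cond_exp M F Yp x + ennreal d * 2"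
      using elim(8) unfolding Ez_def by (intro add_left_mono mult_left_mono) auto
    also have "\<dots> \<le> ennreal kap + ennreal mu * ?a + ennreal d * 2"
      using elim(4,6) by (intro add_mono mult_left_mono) auto
    finally have "(nn_cond_exp M F E x + ennreal c0) + ennreal mu * ?a \<le> (ennreal kap + ennreal d * 2) + ennreal mu * ?a"
      by (simp add: algebra_simps)
    moreover have "ennreal mu * ?a \<noteq> \<infinity>" using elim(7) by (simp add: ennreal_mult_eq_top_iff)
    ultimately have "nn_cond_exp M F E x + ennreal c0 \<le> ennreal kap + ennreal d * 2"
      by (metis add.commute ennreal_add_left_cancel_le)
    moreover have "ennreal kap + ennreal d * 2 = ennreal (kap + 2 * d)"
      using pos by (simp add: ennreal_plus ennreal_mult mult.commute)
    ultimately show ?case unfolding E_def by simp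
  qed
qed

end



lemma sfs: "prob_space M \<Longrightarrow> subalgebra M G \<Longrightarrow> sigma_finite_subalgebra M G"
  by (rule finite_measure_subalgebra_is_sigma_finite)
     (simp add: finite_measure_subalgebra_def finite_measure_subalgebra_axioms_def prob_space_def)

lemma maximal:
  fixes M :: "'a measure" and F :: "nat \<Rightarrow> 'a measure" and Y :: "nat \<Rightarrow> 'a \<Rightarrow> real"
    and c :: "nat \<Rightarrow> real" and lam u :: real and n :: nat
  assumes P: "prob_space M"
    and sub: "\<And>i. i \<le> n \<Longrightarrow> subalgebra M (F i)"
    and mono: "\<And>i j. i \<le> j \<Longrightarrow> j \<le> n \<Longrightarrow> sets (F i) \<subseteq> sets (F j)"
    and Ym: "\<And>i. i \<in> {1..n} \<Longrightarrow> Y i \<in> borel_measurable (F i)"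
    and lam: "lam \<ge> 0"
    and c: "\<And>i. i \<in> {1..n} \<Longrightarrow> c i \<ge> 1"
    and mgf: "\<And>i. i \<in> {1..n} \<Longrightarrow> AE x in M. nn_cond_exp M (F (i-1)) (\<lambda>x. ennreal (exp (lam * Y i x))) x \<le> ennreal (c i)"
  shows "measure M {x\<in>space M. \<exists>t\<in>{1..n}. (\<Sum>i=1..t. Y i x) \<ge> u} \<le> exp (-lam*u) * (\<Prod>i=1..n. c i)"
proof -
  interpret prob_space M by fact
  define S where "S = (\<lambda>t x. \<Sum>i=1..min t n. Y i x)"
  define Pc where "Pc = (\<lambda>t. \<Prod>i=1..t. c i)"
  define Z where "Z = (\<lambda>t x. exp (lam * S t x) / Pc t)"
  define B where "B = (\<lambda>k. {x\<in>space M. \<forall>t\<in>{1..k}. S t x < u})"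
  define A where "A = (\<lambda>t. {x\<in>B (t-1). S t x \<ge> u})"
  define W where "W = (\<lambda>k x. (\<Sum>t=1..k. indicator (A t) x * ennreal (Z t x)) + indicator (B k) x * ennreal (Z k x))"
  have Pc_pos: "Pc t > 0" if "t \<le> n" for t
    unfolding Pc_def using that c by (intro prod_pos) (smt (verit) atLeastAtMost_iff le_trans)
  have Pc_mono: "Pc t \<le> Pc n" if "t \<le> n" for t
  proof -
    have "Pc n = Pc t * (\<Prod>i\<in>{t+1..n}. c i)"
      unfolding Pc_def using that by (subst prod.union_disjoint[symmetric]) (auto intro!: prod.cong)
    moreover have "(\<Prod>i\<in>{t+1..n}. c i) \<ge> 1" using c by (intro prod_ge_1) auto
    ultimately show ?thesis using Pc_pos[OF that] by (metis mult_le_cancel_left1 order_less_imp_not_less)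
  qed
  have spF: "space (F k) = space M" if "k \<le> n" for k using sub[OF that] by (simp add: subalgebra_def)
  have YmF: "Y i \<in> borel_measurable (F k)" if "1 \<le> i" "i \<le> k" "k \<le> n" for i k
  proof -
    have "subalgebra (F k) (F i)" using mono[of i k] that spF[of i] spF[of k] sub[of i]
      by (auto simp: subalgebra_def)
    moreover have "Y i \<in> borel_measurable (F i)" using Ym[of i] that by auto
    ultimately show ?thesis by (rule measurable_from_subalg)
  qed
  have SmF: "S t \<in> borel_measurable (F k)" if "t \<le> k" "k \<le> n" for t k
    unfolding S_def using YmF that by (intro borel_measurable_sum) auto
  have BF: "B k \<in> sets (F k)" if "k \<le> n" for k
  proof -
    have "B k = {x\<in>space (F k). \<forall>t\<in>{1..k}. S t x < u}" unfolding B_def using spF[OF that] by simp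
    also have "\<dots> \<in> sets (F k)" using SmF that by measurable
    finally show ?thesis .
  qed
  have SM[measurable]: "S t \<in> borel_measurable M" for t
    unfolding S_def using Ym by (intro borel_measurable_sum) (auto intro!: measurable_from_subalg[OF sub])
  have BM[measurable]: "B k \<in> sets M" for k unfolding B_def by measurable
  have AM[measurable]: "A t \<in> sets M" for t unfolding A_def B_def by measurable
  have ZM[measurable]: "Z t \<in> borel_measurable M" for t unfolding Z_def by measurable
  have W0: "(\<integral>\<^sup>+x. W 0 x \<partial>M) = 1"
  proof -
    have "(\<integral>\<^sup>+x. W 0 x \<partial>M) = (\<integral>\<^sup>+x. indicator (space M) x \<partial>M)"
      by (intro nn_integral_cong) (simp add: W_def B_def Z_def S_def Pc_def)
    also have "\<dots> = 1" by (simp add: emeasure_space_1)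
    finally show ?thesis .
  qed
  have Wstep: "(\<integral>\<^sup>+x. W (Suc k) x \<partial>M) \<le> (\<integral>\<^sup>+x. W k x \<partial>M)" if k: "k < n" for k
  proof -
    define R where "R = (\<lambda>x. \<Sum>t=1..k. indicator (A t) x * ennreal (Z t x))"
    have RM[measurable]: "R \<in> borel_measurable M" unfolding R_def by measurable
    have BSuc: "B (Suc k) = {x\<in>B k. S (Suc k) x < u}"
      unfolding B_def by (auto simp: le_Suc_eq)
    have eq1: "W (Suc k) x = R x + indicator (B k) x * ennreal (Z (Suc k) x)" for x
    proof -
      have "indicator (A (Suc k)) x * ennreal (Z (Suc k) x) + indicator (B (Suc k)) x * ennreal (Z (Suc k) x)
          = indicator (B k) x * ennreal (Z (Suc k) x)"
        unfolding A_def BSuc by (auto simp: indicator_def)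
      then show ?thesis unfolding W_def R_def by (simp add: add.assoc)
    qed
    have cpos: "c (Suc k) > 0" using c[of "Suc k"] k by auto
    have Zsuc: "Z (Suc k) x = Z k x / c (Suc k) * exp (lam * Y (Suc k) x)" for x
    proof -
      have "S (Suc k) x = S k x + Y (Suc k) x" unfolding S_def using k by (simp add: min_def)
      moreover have "Pc (Suc k) = Pc k * c (Suc k)" unfolding Pc_def by simp
      ultimately show ?thesis unfolding Z_def by (simp add: distrib_left exp_add field_simps)
    qed
    interpret sf: sigma_finite_subalgebra M "F k" using sfs[OF P sub[of k]] k by simp
    define G where "G = (\<lambda>x. ennreal (indicator (B k) x * Z k x / c (Suc k)))"
    have GF[measurable]: "G \<in> borel_measurable (F k)"
    proof -
      have [measurable]: "B k \<in> sets (F k)" using BF k by simp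
      have [measurable]: "S k \<in> borel_measurable (F k)" using SmF k by simp
      show ?thesis unfolding G_def Z_def by measurable
    qed
    have YM[measurable]: "Y (Suc k) \<in> borel_measurable M" using Ym[of "Suc k"] k
      by (intro measurable_from_subalg[OF sub[of "Suc k"]]) auto
    have "(\<integral>\<^sup>+x. indicator (B k) x * ennreal (Z (Suc k) x) \<partial>M)
        = (\<integral>\<^sup>+x. G x * ennreal (exp (lam * Y (Suc k) x)) \<partial>M)"
    proof (intro nn_integral_cong)
      fix x
      have Z0: "Z k x \<ge> 0" unfolding Z_def using Pc_pos[of k] k by simp
      have "indicator (B k) x * ennreal (Z (Suc k) x) = ennreal (indicator (B k) x * (Z k x / c (Suc k) * exp (lam * Y (Suc k) x)))"
        by (simp add: Zsuc indicator_def)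
      also have "\<dots> = G x * ennreal (exp (lam * Y (Suc k) x))"
        unfolding G_def using Z0 cpos by (subst ennreal_mult[symmetric]) (auto simp: indicator_def)
      finally show "indicator (B k) x * ennreal (Z (Suc k) x) = G x * ennreal (exp (lam * Y (Suc k) x))" .
    qed
    also have "\<dots> = (\<integral>\<^sup>+x. G x * nn_cond_exp M (F k) (\<lambda>x. ennreal (exp (lam * Y (Suc k) x))) x \<partial>M)"
      by (rule sf.nn_cond_exp_intg[symmetric]) auto
    also have "\<dots> \<le> (\<integral>\<^sup>+x. G x * ennreal (c (Suc k)) \<partial>M)"
      using mgf[of "Suc k"] k by (intro nn_integral_mono_AE) (auto elim!: AE_mp intro!: mult_left_mono)
    also have "\<dots> = (\<integral>\<^sup>+x. indicator (B k) x * ennreal (Z k x) \<partial>M)"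
    proof (intro nn_integral_cong)
      fix x
      have Z0: "Z k x \<ge> 0" unfolding Z_def using Pc_pos[of k] k by simp
      show "G x * ennreal (c (Suc k)) = indicator (B k) x * ennreal (Z k x)"
        unfolding G_def using Z0 cpos by (subst ennreal_mult[symmetric]) (auto simp: indicator_def)
    qed
    finally have main: "(\<integral>\<^sup>+x. indicator (B k) x * ennreal (Z (Suc k) x) \<partial>M) \<le> (\<integral>\<^sup>+x. indicator (B k) x * ennreal (Z k x) \<partial>M)" .
    have "(\<integral>\<^sup>+x. W (Suc k) x \<partial>M) = (\<integral>\<^sup>+x. R x \<partial>M) + (\<integral>\<^sup>+x. indicator (B k) x * ennreal (Z (Suc k) x) \<partial>M)"
      unfolding eq1 by (rule nn_integral_add) auto
    also have "\<dots> \<le> (\<integral>\<^sup>+x. R x \<partial>M) + (\<integral>\<^sup>+x. indicator (B k) x * ennreal (Z k x) \<partial>M)"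
      using main by (rule add_left_mono)
    also have "\<dots> = (\<integral>\<^sup>+x. R x + indicator (B k) x * ennreal (Z k x) \<partial>M)"
      by (rule nn_integral_add[symmetric]) measurable
    also have "\<dots> = (\<integral>\<^sup>+x. W k x \<partial>M)"
      unfolding W_def R_def ..
    finally show ?thesis .
  qed
  have Wle: "(\<integral>\<^sup>+x. W k x \<partial>M) \<le> 1" if "k \<le> n" for k
    using that
  proof (induction k)
    case 0 then show ?case using W0 by simp
  next
    case (Suc k) then show ?case using Wstep[of k] by (meson Suc_le_lessD less_imp_le_nat order_trans)
  qed
  define E where "E = {x\<in>space M. \<exists>t\<in>{1..n}. S t x \<ge> u}"
  have EM[measurable]: "E \<in> sets M" unfolding E_def by measurable
  define K where "K = exp (lam * u) / Pc n"
  have Kpos: "K > 0" unfolding K_def using Pc_pos[of n] by simp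
  have ptw: "ennreal K * indicator E x \<le> W n x" for x
  proof (cases "x \<in> E")
    case True
    then have x: "x \<in> space M" and ex: "\<exists>t. t \<in> {1..n} \<and> S t x \<ge> u" unfolding E_def by auto
    define t0 where "t0 = (LEAST t. t \<in> {1..n} \<and> S t x \<ge> u)"
    have t0: "t0 \<in> {1..n} \<and> S t0 x \<ge> u" unfolding t0_def using ex by (rule LeastI_ex)
    have t0min: "S t x < u" if "t \<in> {1..t0-1}" for t
    proof (rule ccontr)
      assume "\<not> S t x < u"
      then have "t0 \<le> t" unfolding t0_def using that t0 by (intro Least_le) auto
      then show False using that t0 by auto
    qed
    have xA: "x \<in> A t0" unfolding A_def B_def using x t0 t0min by auto
    have "K \<le> Z t0 x"
    proof -
      have "exp (lam * u) \<le> exp (lam * S t0 x)" using t0 lam by (auto intro: mult_left_mono)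
      moreover have "Pc t0 \<le> Pc n" "0 < Pc t0" using Pc_mono Pc_pos t0 by auto
      ultimately show ?thesis unfolding K_def Z_def by (meson frac_le exp_ge_zero)
    qed
    then have "ennreal K * indicator E x \<le> indicator (A t0) x * ennreal (Z t0 x)"
      using xA True by (simp add: ennreal_leI)
    also have "\<dots> \<le> (\<Sum>t=1..n. indicator (A t) x * ennreal (Z t x))"
      using t0 by (intro member_le_sum) auto
    also have "\<dots> \<le> W n x" unfolding W_def by simp
    finally show ?thesis .
  qed simp
  have "ennreal K * emeasure M E = (\<integral>\<^sup>+x. ennreal K * indicator E x \<partial>M)"
    by (simp add: nn_integral_cmult_indicator)
  also have "\<dots> \<le> (\<integral>\<^sup>+x. W n x \<partial>M)" by (intro nn_integral_mono ptw)
  also have "\<dots> \<le> 1" by (rule Wle) simp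
  finally have "ennreal K * ennreal (measure M E) \<le> 1" by (simp add: emeasure_eq_measure)
  then have "K * measure M E \<le> 1" by (simp add: ennreal_mult[symmetric] Kpos less_imp_le)
  then have "measure M E \<le> 1 / K" using Kpos by (simp add: field_simps)
  also have "1 / K = exp (-lam*u) * Pc n" unfolding K_def by (simp add: exp_minus field_simps)
  finally have "measure M E \<le> exp (-lam*u) * Pc n" .
  moreover have "E = {x\<in>space M. \<exists>t\<in>{1..n}. (\<Sum>i=1..t. Y i x) \<ge> u}"
    unfolding E_def S_def by (auto simp: min_def)
  ultimately show ?thesis unfolding Pc_def by simp
qed




lemma mgf_step:
  fixes X Y :: "'a \<Rightarrow> real"
  assumes P: "prob_space M" and sa: "subalgebra M G"
    and X: "integrable M X" "AE x in M. real_cond_exp M G X x = 0"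
    and YM: "Y \<in> borel_measurable M" and m: "m > 0"
    and hyp: "AE x in M. nn_cond_exp M G (\<lambda>y. ennreal (exp ((\<bar>X y\<bar> / m) powr (1 / th)))) x \<le> 2"
    and pw: "\<And>x. x \<in> space M \<Longrightarrow> exp (lam * Y x) + lam * max (- Y x) 0 \<le> 1 + lam * max (Y x) 0 + d * exp ((\<bar>X x\<bar>/m) powr (1/th))"
    and d: "d \<ge> 0" and lam: "lam \<ge> 0"
    and YX: "\<And>x. x \<in> space M \<Longrightarrow> Y x \<le> X x" "\<And>x. x \<in> space M \<Longrightarrow> max (- Y x) 0 = max (- X x) 0"
  shows "AE x in M. nn_cond_exp M G (\<lambda>x. ennreal (exp (lam * Y x))) x \<le> ennreal (1 + 2 * d)"
proof -
  interpret sigma_finite_subalgebra M G using sfs[OF P sa] .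
  have [measurable]: "X \<in> borel_measurable M" using X by auto
  have "AE x in M. nn_cond_exp M G (\<lambda>x. ennreal (exp (lam * Y x))) x + ennreal 0 \<le> ennreal (1 + 2 * d)"
    by (rule step[OF X YM _ hyp]) (use lam d pw YX in auto)
  then show ?thesis by simp
qed

lemma exp_moment:
  assumes P: "prob_space M" and sa: "subalgebra M G" and [measurable]: "Zf \<in> borel_measurable M"
    and hyp: "AE x in M. nn_cond_exp M G (\<lambda>y. ennreal (exp (Zf y))) x \<le> 2"
  shows "measure M {x\<in>space M. Zf x \<ge> t} \<le> 2 * exp (-t)"
proof -
  interpret sigma_finite_subalgebra M G using sfs[OF P sa] .
  interpret prob_space M by fact
  have "(\<integral>\<^sup>+x. ennreal (exp (Zf x)) \<partial>M) = (\<integral>\<^sup>+x. 1 * ennreal (exp (Zf x)) \<partial>M)" by simp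
  also have "\<dots> = (\<integral>\<^sup>+x. 1 * nn_cond_exp M G (\<lambda>y. ennreal (exp (Zf y))) x \<partial>M)"
    by (rule nn_cond_exp_intg[symmetric]) auto
  also have "\<dots> \<le> (\<integral>\<^sup>+x. 2 \<partial>M)" using hyp by (intro nn_integral_mono_AE) auto
  also have "\<dots> = 2" by (simp add: emeasure_space_1)
  finally have I: "(\<integral>\<^sup>+x. ennreal (exp (Zf x)) \<partial>M) \<le> 2" .
  define A where "A = {x\<in>space M. Zf x \<ge> t}"
  have [measurable]: "A \<in> sets M" unfolding A_def by measurable
  have "ennreal (exp t) * emeasure M A = (\<integral>\<^sup>+x. ennreal (exp t) * indicator A x \<partial>M)"
    by (simp add: nn_integral_cmult_indicator)
  also have "\<dots> \<le> (\<integral>\<^sup>+x. ennreal (exp (Zf x)) \<partial>M)"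
    by (intro nn_integral_mono) (auto simp: A_def indicator_def)
  also have "\<dots> \<le> 2" by fact
  finally have "ennreal (exp t) * ennreal (measure M A) \<le> 2" by (simp add: emeasure_eq_measure)
  then have "exp t * measure M A \<le> 2" by (simp add: ennreal_mult[symmetric] ennreal_le_iff[symmetric] del: ennreal_le_iff)
  then have "measure M A \<le> 2 / exp t" by (simp add: field_simps)
  then show ?thesis unfolding A_def by (simp add: exp_minus divide_inverse)
qed




lemma H1:
  fixes r th s b :: real
  assumes r: "r \<ge> 1" and th: "th > 1" and s: "s \<ge> 0" and b: "b \<ge> s * (th - 1)"
  shows "exp (-(b * r powr (1/(th-1)))) \<le> exp (-b) * (1/r) powr s"
proof -
  define v where "v = r powr (1/(th-1))"
  have v1: "v \<ge> 1" unfolding v_def using r th by (simp add: ge_one_powr_ge_zero)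
  have lnv: "ln v = ln r / (th - 1)" unfolding v_def using r th by (simp add: ln_powr)
  have lnv0: "ln v \<ge> 0" using v1 by simp
  have lnvle: "ln v \<le> v - 1" using v1 by (intro ln_le_minus_one) auto
  have b0: "b \<ge> 0" using b s th by (smt (verit) mult_nonneg_nonneg)
  have "s * ln r = s * (th - 1) * ln v" using lnv th by simp
  also have "\<dots> \<le> b * ln v" using b lnv0 by (intro mult_right_mono) auto
  also have "\<dots> \<le> b * (v - 1)" using lnvle b0 by (intro mult_left_mono) auto
  finally have ineq: "-(b * v) \<le> -b + -(s * ln r)" by (simp add: algebra_simps)
  have "exp (-(b * v)) \<le> exp (-b + -(s * ln r))" using ineq by simp
  also have "\<dots> = exp (-b) * exp (-(s * ln r))" by (rule exp_add)
  also have "exp (-(s * ln r)) = (1/r) powr s" using r by (simp add: powr_def ln_div)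
  finally show ?thesis unfolding v_def .
qed

lemma H2:
  fixes th lam y x b bi beta mi ms :: real
  assumes th: "th > 1" and y: "y > 0" "y \<le> b" "y \<le> \<bar>x\<bar>"
    and bdef: "b = mi * bi powr th" and bidef: "bi = beta * (ms/mi) powr (1/(th-1))"
    and lam: "lam \<le> beta powr (1-th) / (2*ms)" and mi: "mi > 0" "mi \<le> ms" and beta: "beta > 0"
  shows "lam * y \<le> ((\<bar>x\<bar>/mi) powr (1/th)) / 2"
proof -
  have ms: "ms > 0" using mi by simp
  have bi0: "bi > 0" unfolding bidef using beta ms mi by simp
  define t where "t = y/mi"
  define B where "B = b/mi"
  have t0: "t > 0" unfolding t_def using y mi by simp
  have tB: "t \<le> B" unfolding t_def B_def using y mi by (simp add: divide_right_mono)
  have Beq: "B = bi powr th" unfolding B_def bdef using mi by simp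
  have e1: "t powr (1/th) = t * t powr (1/th - 1)" using t0 by (simp add: powr_diff)
  have "B powr (1/th - 1) \<le> t powr (1/th - 1)"
    using th t0 tB by (intro powr_mono2') (auto simp: field_simps)
  moreover have "B powr (1/th - 1) = beta powr (1-th) * (mi/ms)"
  proof -
    have "B powr (1/th - 1) = bi powr (th * (1/th - 1))" unfolding Beq using bi0 by (simp add: powr_powr)
    also have "th * (1/th - 1) = 1 - th" using th by (simp add: field_simps)
    also have "bi powr (1 - th) = beta powr (1-th) * ((ms/mi) powr (1/(th-1))) powr (1 - th)"
      unfolding bidef using beta ms mi by (simp add: powr_mult)
    also have "((ms/mi) powr (1/(th-1))) powr (1 - th) = (ms/mi) powr ((1/(th-1)) * (1 - th))"
      by (simp add: powr_powr)
    also have "(1/(th-1)) * (1 - th) = -1" using th by (simp add: field_simps)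
    also have "(ms/mi) powr (-1) = mi/ms" using ms mi by (simp add: powr_minus)
    finally show ?thesis .
  qed
  ultimately have "beta powr (1-th) * (mi/ms) \<le> t powr (1/th - 1)" by simp
  then have "t * (beta powr (1-th) * (mi/ms)) \<le> t * t powr (1/th - 1)"
    using t0 by (intro mult_left_mono) auto
  then have "t * (beta powr (1-th) * (mi/ms)) \<le> t powr (1/th)" using e1 by simp
  moreover have "t * (beta powr (1-th) * (mi/ms)) = y * (beta powr (1-th) / ms)"
    unfolding t_def using mi by (simp add: field_simps)
  moreover have "t powr (1/th) \<le> (\<bar>x\<bar>/mi) powr (1/th)"
    unfolding t_def using y mi t0 th by (intro powr_mono2) (auto simp: divide_right_mono)
  moreover have "2 * (lam * y) \<le> y * (beta powr (1-th) / ms)"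
    using lam y ms by (simp add: field_simps mult_left_mono)
  ultimately show ?thesis by linarith
qed




lemma mds_facts:
  assumes "mds_upto M n F X"
  shows "\<And>i. i \<le> n \<Longrightarrow> subalgebra M (F i)"
    and "\<And>i j. i \<le> j \<Longrightarrow> j \<le> n \<Longrightarrow> sets (F i) \<subseteq> sets (F j)"
    and "\<And>i. i \<in> {1..n} \<Longrightarrow> X i \<in> borel_measurable (F i)"
    and "\<And>i. i \<in> {1..n} \<Longrightarrow> integrable M (X i)"
    and "\<And>i. i \<in> {1..n} \<Longrightarrow> AE x in M. real_cond_exp M (F (i - 1)) (X i) x = 0"
  using assms unfolding mds_upto_def filtration_upto_def by auto

lemma part1:
  fixes M :: "'a measure" and n :: nat and F :: "nat \<Rightarrow> 'a measure"
    and X :: "nat \<Rightarrow> 'a \<Rightarrow> real" and m :: "nat \<Rightarrow> real" and \<theta> \<delta> :: real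
  assumes P: "prob_space M"
    and mds: "mds_upto M n F X"
    and mpos: "\<And>i. i \<in> {1..n} \<Longrightarrow> m i > 0"
    and hyp: "\<And>i. i \<in> {1..n} \<Longrightarrow>
           AE x in M. nn_cond_exp M (F (i - 1))
              (\<lambda>y. ennreal (exp ((\<bar>X i y\<bar> / m i) powr (1 / \<theta>)))) x \<le> 2"
    and d: "0 < \<delta>" "\<delta> < 1"
    and th: "\<theta> = 1/2"
  shows "measure M {x \<in> space M. \<exists>t\<in>{1..n}.
              (\<Sum>i=1..t. X i x) \<ge> 4 * sqrt (exp 1 * (\<Sum>i=1..n. (m i)\<^sup>2) * ln (1 / \<delta>))} \<le> \<delta>"
proof (cases "n = 0")
  case True then show ?thesis using d by simp
next
  case False
  note mf = mds_facts[OF mds]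
  have th2: "1/\<theta> = 1/(1/2)" unfolding th by simp
  define V where "V = (\<Sum>i=1..n. (m i)\<^sup>2)"
  define L where "L = ln (1/\<delta>)"
  define u where "u = 4 * sqrt (exp 1 * V * L)"
  have Vpos: "V > 0" unfolding V_def using False mpos by (intro sum_pos) (auto, metis atLeastAtMost_iff less_irrefl)
  have Lpos: "L > 0" unfolding L_def using d by simp
  define lam where "lam = u / (8*V)"
  have u0: "u \<ge> 0" unfolding u_def using Vpos Lpos by simp
  have lam0: "lam \<ge> 0" unfolding lam_def using u0 Vpos by simp
  define c where "c = (\<lambda>i. exp (4 * (lam^2 * (m i)^2)))"
  have mgf: "AE x in M. nn_cond_exp M (F (i-1)) (\<lambda>x. ennreal (exp (lam * X i x))) x \<le> ennreal (c i)"
    if i: "i \<in> {1..n}" for i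
  proof -
    let ?a = "lam^2 * (m i)^2"
    have XM: "X i \<in> borel_measurable M" using mf(3)[OF i] mf(1)[of i] i by (auto intro: measurable_from_subalg)
    have "AE x in M. nn_cond_exp M (F (i-1)) (\<lambda>x. ennreal (exp (lam * X i x))) x \<le> ennreal (1 + 2 * (?a * exp (?a/2) / exp 1))"
      apply (rule mgf_step[OF P mf(1) mf(4)[OF i] mf(5)[OF i] XM mpos[OF i] hyp[OF i]])
      using i lam0 subg_pw[OF lam0 mpos[OF i]] th2 by (auto simp: divide_nonneg_nonneg)
    moreover have "ennreal (1 + 2 * (?a * exp (?a/2) / exp 1)) \<le> ennreal (c i)"
      unfolding c_def by (intro ennreal_leI subg_final) simp
    ultimately show ?thesis by (auto elim: order_trans)
  qed
  have "measure M {x\<in>space M. \<exists>t\<in>{1..n}. (\<Sum>i=1..t. X i x) \<ge> u} \<le> exp (-lam*u) * (\<Prod>i=1..n. c i)"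
    by (rule maximal[where c=c and Y=X and u=u and n=n and F=F, OF P mf(1) mf(2) mf(3) lam0 _ mgf]) (auto simp: c_def)
  also have "(\<Prod>i=1..n. c i) = exp (4 * lam^2 * V)"
    unfolding c_def V_def by (simp add: exp_sum[symmetric] sum_distrib_left mult.assoc)
  also have "exp (-lam*u) * exp (4 * lam^2 * V) = exp (- (u^2 / (16*V)))"
  proof -
    have "-lam*u + 4 * lam^2 * V = - (u^2 / (16*V))"
      unfolding lam_def using Vpos by (simp add: power2_eq_square field_simps)
    then show ?thesis by (simp add: mult_exp_exp)
  qed
  also have "u^2 / (16*V) = exp 1 * L"
    unfolding u_def using Vpos Lpos by (simp add: power_mult_distrib)
  also have "exp (- (exp 1 * L)) \<le> exp (- L)"
  proof -
    have "1 \<le> exp (1::real)" by simp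
    then have "L \<le> exp 1 * L" using Lpos by (simp add: mult_le_cancel_right1)
    then show ?thesis by simp
  qed
  also have "exp (-L) = \<delta>" unfolding L_def using d by (simp add: ln_div exp_minus ln_inverse[symmetric])
  finally show ?thesis unfolding u_def V_def L_def .
qed




lemma zpow_pos: "x > 0 \<Longrightarrow> zpow x a = x powr a" by (simp add: zpow_def)

lemma max_powr: fixes a b p :: real assumes "a \<ge> 0" "b \<ge> 0" "p \<ge> 0"
  shows "max (a powr p) (b powr p) = (max a b) powr p"
proof (cases "a \<le> b")
  case True
  then have "a powr p \<le> b powr p" using assms by (intro powr_mono2) auto
  then show ?thesis using True by (simp add: max_def)
next
  case False
  then have "b powr p \<le> a powr p" using assms by (intro powr_mono2) auto
  then show ?thesis using False by (simp add: max_def)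
qed

lemma part2:
  fixes M :: "'a measure" and n :: nat and F :: "nat \<Rightarrow> 'a measure"
    and X :: "nat \<Rightarrow> 'a \<Rightarrow> real" and m :: "nat \<Rightarrow> real" and \<theta> \<delta> s :: real
  assumes P: "prob_space M"
    and mds: "mds_upto M n F X"
    and mpos: "\<And>i. i \<in> {1..n} \<Longrightarrow> m i > 0"
    and hyp: "\<And>i. i \<in> {1..n} \<Longrightarrow>
           AE x in M. nn_cond_exp M (F (i - 1))
              (\<lambda>y. ennreal (exp ((\<bar>X i y\<bar> / m i) powr (1 / \<theta>)))) x \<le> 2"
    and d: "0 < \<delta>" "\<delta> < 1"
    and th: "\<theta> \<ge> 1" and s: "s \<ge> 0"
  shows "(let mstar = Max (m ` {1..n});
                C1 = 2 powr (3 * \<theta> + 1) * Gamma (3 * \<theta> + 1)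
            in measure M {x \<in> space M. \<exists>t\<in>{1..n}.
              (\<Sum>i=1..t. X i x) \<ge>
                sqrt (C1 * (\<Sum>i=1..n. (m i)\<^sup>2) * ln (2 / \<delta>))
                + 4 * mstar *
                  max (zpow (ln (2 * exp 1 * (\<Sum>j=1..n. m j powr s) / (mstar powr s * \<delta>))) (\<theta> - 1))
                      (zpow (s * \<theta> - s) (\<theta> - 1))
                  * ln (2 / \<delta>)} \<le> \<delta>)"
proof (cases "n = 0")
  case True then show ?thesis using d by (simp add: Let_def)
next
  case False
  interpret prob_space M by fact
  note mf = mds_facts[OF mds]
  define ms where "ms = Max (m ` {1..n})"
  have fin: "finite (m ` {1..n})" "m ` {1..n} \<noteq> {}" using False by auto
  have msge: "m i \<le> ms" if "i \<in> {1..n}" for i unfolding ms_def using fin that by (intro Max_ge) auto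
  obtain j where j: "j \<in> {1..n}" "m j = ms" using Max_in[OF fin] unfolding ms_def by auto
  have mspos: "ms > 0" using j mpos by force
  define K where "K = 2 powr (3*\<theta> - 1) * Gamma (3*\<theta> + 1)"
  define C1 where "C1 = 2 powr (3 * \<theta> + 1) * Gamma (3 * \<theta> + 1)"
  have Kpos: "K > 0" unfolding K_def using th by (simp add: Gamma_real_pos)
  have C1K: "C1 = 4 * K"
  proof -
    have e: "3 * \<theta> + 1 = 2 + (3*\<theta> - 1)" by simp
    have "(2::real) powr (3 * \<theta> + 1) = 2 powr 2 * 2 powr (3*\<theta> - 1)" unfolding e by (rule powr_add)
    then show ?thesis unfolding C1_def K_def by simp
  qed
  define V where "V = (\<Sum>i=1..n. (m i)\<^sup>2)"
  have Vpos: "V > 0" unfolding V_def using False mpos by (intro sum_pos) (auto, metis atLeastAtMost_iff less_irrefl)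
  define L where "L = ln (2/\<delta>)"
  have Lpos: "L > 0" unfolding L_def using d by simp
  define N where "N = (\<Sum>j=1..n. m j powr s)"
  have NN: "ms powr s \<le> N" unfolding N_def using j by (intro member_le_sum[where f="\<lambda>j. m j powr s" and i=j, simplified j]) auto
  have msps: "ms powr s > 0" using mspos by simp
  have N0: "N > 0" using NN msps by linarith
  define ell where "ell = ln (2 * exp 1 * N / (ms powr s * \<delta>))"
  have arg1: "2 * exp 1 * N / (ms powr s * \<delta>) \<ge> 2 * exp 1 / \<delta>"
    using NN msps d by (simp add: field_simps)
  have arg2: "2 * exp 1 / \<delta> > 1" using d by (simp add: field_simps) (smt (verit) exp_gt_one)
  have ell_pos: "ell > 0" unfolding ell_def using arg1 arg2 by simp
  have exp_ell: "exp (-ell) = ms powr s * \<delta> / (2 * exp 1 * N)"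
    unfolding ell_def using arg1 arg2 by (simp add: exp_minus)
  define beta where "beta = max ell (s*\<theta> - s)"
  have beta: "beta > 0" "beta \<ge> ell" "beta \<ge> s * (\<theta> - 1)" unfolding beta_def using ell_pos by (auto simp: algebra_simps)
  define R where "R = max (zpow ell (\<theta> - 1)) (zpow (s * \<theta> - s) (\<theta> - 1))"
  have R: "R = beta powr (\<theta> - 1)"
  proof (cases "\<theta> = 1")
    case True then show ?thesis unfolding R_def zpow_def using beta by auto
  next
    case False
    have "s * 1 \<le> s * \<theta>" using s th by (intro mult_left_mono) auto
    then have "s * \<theta> - s \<ge> 0" by simp
    moreover have "zpow (s * \<theta> - s) (\<theta> - 1) = (s * \<theta> - s) powr (\<theta> - 1)" using False by (simp add: zpow_def)
    ultimately show ?thesis unfolding R_def beta_def using ell_pos th by (simp add: zpow_pos max_powr)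
  qed
  define u where "u = sqrt (C1 * V * L) + 4 * ms * R * L"
  have R0: "R > 0" using R beta by simp
  have u1: "sqrt (C1 * V * L) \<le> u" "4 * ms * R * L \<le> u" unfolding u_def using R0 mspos Lpos Kpos Vpos C1K by auto
  have u0: "u \<ge> 0" using u1 R0 mspos Lpos by (smt (verit) mult_pos_pos)
  define lam where "lam = min (u / (2*K*V)) (beta powr (1-\<theta>) / (2*ms))"
  have lam0: "lam \<ge> 0" unfolding lam_def using u0 Kpos Vpos mspos by simp
  have lam1: "lam \<le> beta powr (1-\<theta>) / (2*ms)" unfolding lam_def by simp
  define bnd where "bnd = (\<lambda>i. m i * (beta * (ms / m i) powr (1/(\<theta>-1))) powr \<theta>)"
  define Y where "Y = (\<lambda>i x. if \<theta> = 1 then X i x else min (X i x) (bnd i))"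
  have bnd0: "bnd i \<ge> 0" if "i \<in> {1..n}" for i unfolding bnd_def using mpos[OF that] by simp
  have XM: "X i \<in> borel_measurable M" if i: "i \<in> {1..n}" for i
    using mf(3)[OF i] mf(1)[of i] i by (auto intro: measurable_from_subalg)
  have YF: "Y i \<in> borel_measurable (F i)" if i: "i \<in> {1..n}" for i
    using mf(3)[OF i] unfolding Y_def by (cases "\<theta> = 1") auto
  have YM: "Y i \<in> borel_measurable M" if i: "i \<in> {1..n}" for i
    using XM[OF i] unfolding Y_def by (cases "\<theta> = 1") auto
  have mgf: "AE x in M. nn_cond_exp M (F (i-1)) (\<lambda>x. ennreal (exp (lam * Y i x))) x \<le> ennreal (exp (lam^2 * (m i)^2 * K))"
    if i: "i \<in> {1..n}" for i
  proof -
    have yz: "lam * Y i x \<le> ((\<bar>X i x\<bar>/m i) powr (1/\<theta>)) / 2" if yp: "Y i x > 0" for x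
    proof (cases "\<theta> = 1")
      case True
      then have Yx: "Y i x = X i x" unfolding Y_def by simp
      have l: "lam \<le> 1 / (2*ms)" using lam1 True beta(1) by simp
      have "lam * X i x \<le> X i x / (2*ms)" using mult_right_mono[OF l, of "X i x"] yp Yx by simp
      also have "\<dots> \<le> X i x / (2 * m i)" using yp Yx msge[OF i] mpos[OF i]
        by (intro divide_left_mono) auto
      also have "\<dots> = ((\<bar>X i x\<bar>/m i) powr (1/\<theta>)) / 2" using True yp Yx mpos[OF i] by simp
      finally show ?thesis using Yx by simp
    next
      case False
      then have th1: "\<theta> > 1" using th by simp
      have y: "Y i x \<le> bnd i" "Y i x \<le> \<bar>X i x\<bar>" unfolding Y_def using False by auto
      show ?thesis
        by (rule H2[OF th1 yp y(1) y(2) _ _ lam1 mpos[OF i] msge[OF i] beta(1)])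
           (auto simp: bnd_def)
    qed
    have YX1: "Y i x \<le> X i x" for x unfolding Y_def by auto
    have YX2: "max (- Y i x) 0 = max (- X i x) 0" for x unfolding Y_def using bnd0[OF i] by (auto simp: max_def)
    have YX3: "\<bar>Y i x\<bar> \<le> \<bar>X i x\<bar>" for x unfolding Y_def using bnd0[OF i] by auto
    have A: "AE x in M. nn_cond_exp M (F (i-1)) (\<lambda>x. ennreal (exp (lam * Y i x))) x \<le> ennreal (1 + 2 * (lam^2 * (m i)^2 * K / 2))"
      apply (rule mgf_step[OF P mf(1) mf(4)[OF i] mf(5)[OF i] YM[OF i] mpos[OF i] hyp[OF i]])
      using subw_pw[OF th lam0 mpos[OF i] YX3 yz] YX1 YX2 lam0 Kpos i unfolding K_def by auto
    have B: "ennreal (1 + 2 * (lam^2 * (m i)^2 * K / 2)) \<le> ennreal (exp (lam^2 * (m i)^2 * K))"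
      using exp_ge_add_one_self[of "lam^2 * (m i)^2 * K"] by (intro ennreal_leI) simp
    show ?thesis using A
    proof eventually_elim
      case (elim x) then show ?case using B by (rule order_trans)
    qed
  qed
  have maxY: "measure M {x\<in>space M. \<exists>t\<in>{1..n}. (\<Sum>i=1..t. Y i x) \<ge> u} \<le> \<delta>/2"
  proof -
    have "measure M {x\<in>space M. \<exists>t\<in>{1..n}. (\<Sum>i=1..t. Y i x) \<ge> u}
        \<le> exp (-lam*u) * (\<Prod>i=1..n. exp (lam^2 * (m i)^2 * K))"
      by (rule maximal[where c="\<lambda>i. exp (lam^2 * (m i)^2 * K)" and Y=Y and u=u and n=n and F=F,
            OF P mf(1) mf(2) YF lam0 _ mgf]) (use Kpos in auto)
    also have "(\<Prod>i=1..n. exp (lam^2 * (m i)^2 * K)) = exp (lam^2 * K * V)"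
      unfolding V_def by (simp add: exp_sum[symmetric] sum_distrib_left sum_distrib_right mult.commute mult.left_commute)
    also have "exp (-lam*u) * exp (lam^2 * K * V) = exp (-lam*u + lam^2 * K * V)" by (simp add: mult_exp_exp)
    also have "\<dots> \<le> exp (-L)"
    proof -
      have "-lam*u + lam^2 * K * V \<le> -L"
      proof (cases "u / (2*K*V) \<le> beta powr (1-\<theta>) / (2*ms)")
        case True
        then have l: "lam = u / (2*K*V)" unfolding lam_def by simp
        have nn: "0 \<le> C1 * V * L" using C1K Kpos Vpos Lpos by simp
        have "sqrt (C1 * V * L)^2 \<le> u^2" using u1(1) nn by (intro power_mono) auto
        then have "C1 * V * L \<le> u^2" using nn by simp
        then have "4*K*V*L \<le> u^2" using C1K by simp
        then have "L \<le> u^2 / (4*K*V)" using Kpos Vpos by (simp add: field_simps)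
        moreover have "-lam*u + lam^2 * K * V = - (u^2 / (4*K*V))"
          unfolding l using Kpos Vpos by (simp add: power2_eq_square field_simps)
        ultimately show ?thesis by linarith
      next
        case False
        then have l: "lam = beta powr (1-\<theta>) / (2*ms)" and lt: "lam < u / (2*K*V)" unfolding lam_def by auto
        have "lam * K * V \<le> u / 2" using lt Kpos Vpos by (simp add: field_simps)
        then have "lam * (lam * K * V) \<le> lam * (u / 2)" using lam0 by (rule mult_left_mono)
        then have a: "-lam*u + lam^2 * K * V \<le> - (lam * u / 2)" by (simp add: power2_eq_square algebra_simps)
        have "lam * (4 * ms * R * L) \<le> lam * u" using u1(2) lam0 by (rule mult_left_mono)
        moreover have "lam * (4 * ms * R * L) = 2 * L"
        proof -
          have "beta powr (1-\<theta>) * beta powr (\<theta> - 1) = 1" using beta(1) by (simp add: powr_add[symmetric])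
          then show ?thesis unfolding l R using mspos by (simp add: field_simps)
        qed
        ultimately show ?thesis using a by linarith
      qed
      then show ?thesis by simp
    qed
    also have "exp (-L) = \<delta>/2" unfolding L_def using d by (simp add: exp_minus)
    finally show ?thesis .
  qed
  define T where "T = (\<Union>i\<in>{1..n}. {x\<in>space M. Y i x \<noteq> X i x})"
  have TM: "T \<in> sets M" unfolding T_def using XM YM by (intro sets.finite_UN) auto
  have trunc: "measure M T \<le> \<delta>/2"
  proof (cases "\<theta> = 1")
    case True
    then have "T = {}" unfolding T_def Y_def by auto
    then show ?thesis using d by simp
  next
    case False
    then have th1: "\<theta> > 1" using th by simp
    define bi where "bi = (\<lambda>i. beta * (ms / m i) powr (1/(\<theta>-1)))"
    have bi0: "bi i \<ge> 0" for i unfolding bi_def using beta by simp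
    have subi: "{x\<in>space M. Y i x \<noteq> X i x} \<subseteq> {x\<in>space M. (\<bar>X i x\<bar>/m i) powr (1/\<theta>) \<ge> bi i}"
      if i: "i \<in> {1..n}" for i
    proof safe
      fix x assume x: "x \<in> space M" "Y i x \<noteq> X i x"
      then have "X i x > bnd i" unfolding Y_def using False by (auto simp: min_def split: if_splits)
      then have "bi i powr \<theta> \<le> \<bar>X i x\<bar> / m i" using mpos[OF i] bnd0[OF i]
        unfolding bnd_def bi_def by (simp add: field_simps)
      then have "(bi i powr \<theta>) powr (1/\<theta>) \<le> (\<bar>X i x\<bar> / m i) powr (1/\<theta>)"
        using th by (intro powr_mono2) auto
      moreover have "(bi i powr \<theta>) powr (1/\<theta>) = bi i" using th bi0[of i] by (simp add: powr_powr)
      ultimately show "(\<bar>X i x\<bar>/m i) powr (1/\<theta>) \<ge> bi i" by simp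
    qed
    have mi: "measure M {x\<in>space M. Y i x \<noteq> X i x} \<le> 2 * exp (- bi i)" if i: "i \<in> {1..n}" for i
    proof -
      have [measurable]: "X i \<in> borel_measurable M" "Y i \<in> borel_measurable M" using XM[OF i] YM[OF i] by auto
      have "measure M {x\<in>space M. Y i x \<noteq> X i x} \<le> measure M {x\<in>space M. (\<bar>X i x\<bar>/m i) powr (1/\<theta>) \<ge> bi i}"
        using subi[OF i] by (intro finite_measure_mono) auto
      also have "\<dots> \<le> 2 * exp (- bi i)"
        by (rule exp_moment[OF P mf(1) _ hyp[OF i]]) (use i in auto)
      finally show ?thesis .
    qed
    have ei: "exp (- bi i) \<le> exp (-beta) * (m i powr s / ms powr s)" if i: "i \<in> {1..n}" for i
    proof -
      have r: "ms / m i \<ge> 1" using msge[OF i] mpos[OF i] by simp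
      have "exp (- bi i) \<le> exp (-beta) * (1 / (ms / m i)) powr s"
        unfolding bi_def using H1[OF r th1 s beta(3)] by simp
      also have "(1 / (ms / m i)) powr s = m i powr s / ms powr s"
        using mpos[OF i] mspos by (simp add: powr_divide)
      finally show ?thesis .
    qed
    have "measure M T \<le> (\<Sum>i\<in>{1..n}. measure M {x\<in>space M. Y i x \<noteq> X i x})"
      unfolding T_def using XM YM by (intro finite_measure_subadditive_finite) auto
    also have "\<dots> \<le> (\<Sum>i\<in>{1..n}. 2 * (exp (-beta) * (m i powr s / ms powr s)))"
      using mi ei by (intro sum_mono) (smt (verit))
    also have "\<dots> = 2 * exp (-beta) * N / ms powr s"
      unfolding N_def by (simp add: sum_distrib_left sum_divide_distrib[symmetric] mult.assoc)
    also have "\<dots> \<le> 2 * exp (-ell) * N / ms powr s"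
      using beta(2) N0 msps by (intro divide_right_mono mult_right_mono mult_left_mono) auto
    also have "\<dots> = \<delta> / exp 1" unfolding exp_ell using msps N0 by (simp add: field_simps)
    also have "\<dots> \<le> \<delta> / 2" using d by (intro divide_left_mono) (auto simp: exp_ge_add_one_self[of 1, simplified] intro: order_trans[OF _ exp_ge_add_one_self])
    finally show ?thesis .
  qed
  define EY where "EY = {x\<in>space M. \<exists>t\<in>{1..n}. (\<Sum>i=1..t. Y i x) \<ge> u}"
  have EYM: "EY \<in> sets M" unfolding EY_def using YM by measurable
  define E where "E = {x\<in>space M. \<exists>t\<in>{1..n}. (\<Sum>i=1..t. X i x) \<ge> u}"
  have "E \<subseteq> EY \<union> T"
  proof
    fix x assume x: "x \<in> E"
    show "x \<in> EY \<union> T"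
    proof (cases "x \<in> T")
      case False
      then have "\<forall>i\<in>{1..n}. Y i x = X i x" using x unfolding T_def E_def by auto
      then have "(\<Sum>i=1..t. Y i x) = (\<Sum>i=1..t. X i x)" if "t \<in> {1..n}" for t
        using that by (intro sum.cong) auto
      then show ?thesis using x unfolding E_def EY_def by auto
    qed simp
  qed
  then have "measure M E \<le> measure M (EY \<union> T)" using EYM TM by (intro finite_measure_mono) auto
  also have "\<dots> \<le> measure M EY + measure M T" using EYM TM by (rule measure_Un_le)
  also have "\<dots> \<le> \<delta>" using maxY trunc unfolding EY_def by simp
  finally have "measure M E \<le> \<delta>" .
  then show ?thesis unfolding Let_def E_def u_def C1_def V_def L_def R_def ell_def N_def ms_def .
qed


theorem proposition2:
  fixes M :: "'a measure" and n :: nat and F :: "nat \<Rightarrow> 'a measure"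
    and X :: "nat \<Rightarrow> 'a \<Rightarrow> real" and m :: "nat \<Rightarrow> real" and \<theta> \<delta> :: real
  assumes "prob_space M"
    and "mds_upto M n F X"
    and "\<And>i. i \<in> {1..n} \<Longrightarrow> m i > 0"
    and "\<And>i. i \<in> {1..n} \<Longrightarrow>
           AE x in M. nn_cond_exp M (F (i - 1))
              (\<lambda>y. ennreal (exp ((\<bar>X i y\<bar> / m i) powr (1 / \<theta>)))) x \<le> 2"
    and "0 < \<delta>" and "\<delta> < 1"
  shows "(\<theta> = 1/2 \<longrightarrow>
           measure M {x \<in> space M. \<exists>t\<in>{1..n}.
              (\<Sum>i=1..t. X i x) \<ge> 4 * sqrt (exp 1 * (\<Sum>i=1..n. (m i)\<^sup>2) * ln (1 / \<delta>))} \<le> \<delta>)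
       \<and> (\<theta> \<ge> 1 \<longrightarrow> (\<forall>s\<ge>0.
           (let mstar = Max (m ` {1..n});
                C1 = 2 powr (3 * \<theta> + 1) * Gamma (3 * \<theta> + 1)
            in measure M {x \<in> space M. \<exists>t\<in>{1..n}.
              (\<Sum>i=1..t. X i x) \<ge>
                sqrt (C1 * (\<Sum>i=1..n. (m i)\<^sup>2) * ln (2 / \<delta>))
                + 4 * mstar *
                  max (zpow (ln (2 * exp 1 * (\<Sum>j=1..n. m j powr s) / (mstar powr s * \<delta>))) (\<theta> - 1))
                      (zpow (s * \<theta> - s) (\<theta> - 1))
                  * ln (2 / \<delta>)} \<le> \<delta>)))"
    using part1[OF assms] part2[OF assms] by blast

end
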